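(* Let $f:\mathbb{R}^m\to\mathbb{R}\cup\{+\infty\}$ be a proper lower semicontinuous convex function and let $\bar x\in\mathbb{R}^m$ be such that $f(\bar x)=0$. Then the following are equivalent: (i) $\min_{\|h\|=1}f'(\bar x,h)\neq 0$; (ii) there exist constants $c,\varepsilon>0$ such that for every proper lower semicontinuous convex $g:\mathbb{R}^m\to\mathbb{R}\cup\{+\infty\}$ with $\bar x\in S_g$ and $$\limsup_{x\to\bar x}\frac{|(f(x)-g(x))-(f(\bar x)-g(\bar x))|}{\|x-\bar x\|}\le\varepsilon,$$ one has $\tau_{\min}(g,\bar x)\le c$; (iii) there exist constants $c,\varepsilon>0$ such that for all $u^*\in\mathbb{R}^m$ with $\|u^*\|\le1$, one has $\tau_{\min}(g_{u^*,\varepsilon},\bar x)\le c$, where $g_{u^*,\varepsilon}(x):=f(x)+\varepsilon\langle u^*,x-\bar x\rangle$ for all $x\in\mathbb{R}^m$.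
   Context: $\mathbb{R}^m$ carries the Euclidean norm, $B(\bar x,\delta)$ is the closed ball of radius $\delta$ around $\bar x$, and $d(x,D)=\inf\{\|x-y\|:y\in D\}$ (with $\inf\emptyset=+\infty$). $f'(\bar x,h):=\lim_{t\to0^+}\frac{f(\bar x+th)-f(\bar x)}{t}$ is the directional derivative. For a proper lsc convex $g$, $S_g:=\{x: g(x)\le0\}$ and the local error bound modulus at $\bar x$ is $\tau_{\min}(g,\bar x):=\inf\{\tau>0:\exists\delta>0 \text{ with } d(x,S_g)\le\tau[g(x)]_+\ \forall x\in B(\bar x,\delta)\}$, where $[t]_+=\max\{t,0\}$ and $\inf\emptyset=+\infty$. *)

theory Defs
  imports "HOL-Analysis.Analysis"
begin

(* Extended-real valued functions R^m -> R \<union> {+\<infinity>} are modelled as 'a \<Rightarrow> ereal;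
   "proper" excludes -\<infinity> and requires a finite value somewhere. *)

definition proper_fun :: "('a \<Rightarrow> ereal) \<Rightarrow> bool" where
  "proper_fun f \<longleftrightarrow> (\<forall>x. f x \<noteq> -\<infinity>) \<and> (\<exists>x. f x < \<infinity>)"

definition lsc_fun :: "('a::topological_space \<Rightarrow> ereal) \<Rightarrow> bool" where
  "lsc_fun f \<longleftrightarrow> (\<forall>x. f x \<le> Liminf (at x) f)"

definition convex_fun :: "('a::real_vector \<Rightarrow> ereal) \<Rightarrow> bool" where
  "convex_fun f \<longleftrightarrow> (\<forall>x y t. 0 < t \<and> t < 1 \<longrightarrow>
      f ((1 - t) *\<^sub>R x + t *\<^sub>R y) \<le> ereal (1 - t) * f x + ereal t * f y)"

definition plsc_convex :: "('a::real_normed_vector \<Rightarrow> ereal) \<Rightarrow> bool" where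
  "plsc_convex f \<longleftrightarrow> proper_fun f \<and> lsc_fun f \<and> convex_fun f"

definition dir_deriv :: "('a::real_normed_vector \<Rightarrow> ereal) \<Rightarrow> 'a \<Rightarrow> 'a \<Rightarrow> ereal" where
  "dir_deriv f xb h = Lim (at_right (0::real)) (\<lambda>t. (f (xb + t *\<^sub>R h) - f xb) / ereal t)"

definition Sset :: "('a \<Rightarrow> ereal) \<Rightarrow> 'a set" where
  "Sset g = {x. g x \<le> 0}"

definition edist_set :: "'a::metric_space \<Rightarrow> 'a set \<Rightarrow> ereal" where
  "edist_set x D = (if D = {} then \<infinity> else ereal (infdist x D))"

definition pos_part :: "ereal \<Rightarrow> ereal" where
  "pos_part t = max t 0"

definition tau_min :: "('a::euclidean_space \<Rightarrow> ereal) \<Rightarrow> 'a \<Rightarrow> ereal" where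
  "tau_min g xb = Inf {ereal \<tau> | \<tau>. \<tau> > 0 \<and> (\<exists>\<delta>>0. \<forall>x\<in>cball xb \<delta>.
       edist_set x (Sset g) \<le> ereal \<tau> * pos_part (g x))}"

definition ediff :: "ereal \<Rightarrow> ereal \<Rightarrow> ereal" where
  "ediff a b = (if a = \<infinity> \<and> b = \<infinity> then 0 else a - b)"

definition perturb_limsup :: "('a::real_normed_vector \<Rightarrow> ereal) \<Rightarrow> ('a \<Rightarrow> ereal) \<Rightarrow> 'a \<Rightarrow> ereal" where
  "perturb_limsup f g xb = Limsup (at xb)
     (\<lambda>x. \<bar>ediff (ediff (f x) (g x)) (ediff (f xb) (g xb))\<bar> / ereal (norm (x - xb)))"

end

theory Submission
  imports Defs
begin


lemma conv_small:
  assumes cf: "convex_fun f" and f0: "f xb = 0" and s: "0 < s" "s < t"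
  shows "f (xb + s *\<^sub>R h) \<le> ereal (s/t) * f (xb + t *\<^sub>R h)"
proof -
  have t: "0 < s/t" "s/t < 1" using s by auto
  have e: "(1 - s/t) *\<^sub>R xb + (s/t) *\<^sub>R (xb + t *\<^sub>R h) = xb + s *\<^sub>R h"
    using s by (simp add: algebra_simps)
  have "f ((1 - s/t) *\<^sub>R xb + (s/t) *\<^sub>R (xb + t *\<^sub>R h)) \<le> ereal (1 - s/t) * f xb + ereal (s/t) * f (xb + t *\<^sub>R h)"
    using cf t unfolding convex_fun_def by blast
  then show ?thesis using e f0 by simp
qed

lemma q_mono:
  assumes cf: "convex_fun f" and nm: "\<forall>x. f x \<noteq> -\<infinity>" and f0: "f xb = 0" and s: "0 < s" "s \<le> t"
  shows "f (xb + s *\<^sub>R h) / ereal s \<le> f (xb + t *\<^sub>R h) / ereal t"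
proof (cases "s = t")
  case True then show ?thesis by simp
next
  case False
  then have st: "s < t" using s by simp
  have le: "f (xb + s *\<^sub>R h) \<le> ereal (s/t) * f (xb + t *\<^sub>R h)"
    by (rule conv_small[OF cf f0 s(1) st])
  show ?thesis
  proof (cases "f (xb + t *\<^sub>R h)")
    case (real r)
    then have "f (xb + s *\<^sub>R h) \<le> ereal (s/t*r)" using le by simp
    moreover obtain r' where r': "f (xb + s *\<^sub>R h) = ereal r'"
      using calculation nm by (cases "f (xb + s *\<^sub>R h)") auto
    ultimately have "r' \<le> s/t*r" by simp
    then have "r'/s \<le> r/t" using s st by (simp add: field_simps)
    then show ?thesis using r' real s st by simp
  next
    case PInf then show ?thesis using s st by simp
  next
    case MInf then show ?thesis using nm by simp
  qed
qed

lemma dd_inf: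
  assumes cf: "convex_fun f" and nm: "\<forall>x. f x \<noteq> -\<infinity>" and f0: "f xb = 0"
  shows "dir_deriv f xb h = (INF t\<in>{0<..}. f (xb + t *\<^sub>R h) / ereal t)"
proof -
  define q where "q t = f (xb + t *\<^sub>R h) / ereal t" for t
  define I where "I = (INF t\<in>{0<..}. q t)"
  have "(q \<longlongrightarrow> I) (at_right 0)"
  proof (rule order_tendstoI)
    fix a assume "a < I"
    then have "\<forall>t>0. a < q t" unfolding I_def
      by (metis greaterThan_iff INF_lower order_less_le_trans)
    then show "\<forall>\<^sub>F t in at_right 0. a < q t"
      using eventually_at_right_less[of "0::real"] by (auto elim: eventually_mono)
  next
    fix a assume "I < a"
    then obtain t0 where t0: "t0 > 0" "q t0 < a" unfolding I_def by (auto simp: INF_less_iff)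
    have "\<forall>\<^sub>F t in at_right 0. t \<in> {0<..<t0}" using eventually_at_right_real[OF t0(1)] .
    then show "\<forall>\<^sub>F t in at_right 0. q t < a"
    proof (rule eventually_mono)
      fix t assume "t \<in> {0<..<t0}"
      then have "q t \<le> q t0" unfolding q_def using q_mono[OF cf nm f0, of t t0] by auto
      then show "q t < a" using t0 by simp
    qed
  qed
  then have "Lim (at_right 0) q = I" by (intro tendsto_Lim) auto
  then show ?thesis unfolding dir_deriv_def q_def I_def using f0 by simp
qed



lemma slater:
  assumes cg: "convex_fun g" and gx: "g x = ereal \<alpha>" "\<alpha> > 0" and gz: "g z = ereal \<beta>" "\<beta> < 0"
  shows "infdist x (Sset g) \<le> norm (x - z) * \<alpha> / (\<alpha> - \<beta>)"
proof -
  define s where "s = \<alpha> / (\<alpha> - \<beta>)"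
  have s: "0 < s" "s < 1" using gx gz by (auto simp: s_def field_simps)
  define w where "w = (1 - s) *\<^sub>R x + s *\<^sub>R z"
  have "g w \<le> ereal (1 - s) * g x + ereal s * g z"
    using cg s unfolding convex_fun_def w_def by blast
  also have "\<dots> = ereal ((1 - s) * \<alpha> + s * \<beta>)" using gx gz by simp
  also have "(1 - s) * \<alpha> + s * \<beta> = 0" using gx gz unfolding s_def by (simp add: field_simps)
  finally have "w \<in> Sset g" by (simp add: Sset_def zero_ereal_def)
  then have "infdist x (Sset g) \<le> dist x w" by (rule infdist_le)
  also have "dist x w = norm (s *\<^sub>R (x - z))" unfolding w_def dist_norm
    by (simp add: algebra_simps)
  also have "\<dots> = s * norm (x - z)" using s by simp
  finally show ?thesis unfolding s_def by (simp add: field_simps)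
qed

lemma eb_point:
  assumes S: "xb \<in> Sset g" and c: "c > 0" and nm: "g x \<noteq> -\<infinity>"
    and H: "\<And>\<alpha>. g x = ereal \<alpha> \<Longrightarrow> \<alpha> > 0 \<Longrightarrow> infdist x (Sset g) \<le> c * \<alpha>"
  shows "edist_set x (Sset g) \<le> ereal c * pos_part (g x)"
proof -
  have ne: "Sset g \<noteq> {}" using S by auto
  show ?thesis
  proof (cases "g x")
    case (real \<alpha>)
    show ?thesis
    proof (cases "\<alpha> > 0")
      case True
      then show ?thesis using H[OF real True] ne real by (simp add: edist_set_def pos_part_def)
    next
      case False
      then have "x \<in> Sset g" using real by (simp add: Sset_def)
      then show ?thesis using ne real False by (simp add: edist_set_def pos_part_def max_def)
    qed
  next
    case PInf then show ?thesis using c by (simp add: edist_set_def pos_part_def)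
  next
    case MInf then show ?thesis using nm by simp
  qed
qed

lemma tau_le:
  assumes "c > 0" "\<delta> > 0" "\<forall>x\<in>cball xb \<delta>. edist_set x (Sset g) \<le> ereal c * pos_part (g x)"
  shows "tau_min g xb \<le> ereal c"
  unfolding tau_min_def using assms by (intro Inf_lower) blast

lemma limsup_ev:
  assumes "perturb_limsup f g xb \<le> ereal \<epsilon>" "\<epsilon> < e"
  shows "\<exists>r>0. \<forall>x. x \<noteq> xb \<and> dist x xb < r \<longrightarrow>
     \<bar>ediff (ediff (f x) (g x)) (ediff (f xb) (g xb))\<bar> / ereal (norm (x - xb)) < ereal e"
proof -
  have "perturb_limsup f g xb < ereal e" proof (rule order.strict_trans1[OF assms(1)]) qed (use assms(2) in simp)
  then have "eventually (\<lambda>x. \<bar>ediff (ediff (f x) (g x)) (ediff (f xb) (g xb))\<bar> / ereal (norm (x - xb)) < ereal e) (at xb)"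
    unfolding perturb_limsup_def by (rule Limsup_lessD)
  then show ?thesis unfolding eventually_at by auto
qed

lemma quot:
  assumes f0: "f xb = 0" and gb: "g xb = ereal b" and x: "x \<noteq> xb"
    and nf: "f x \<noteq> -\<infinity>" and ng: "g x \<noteq> -\<infinity>"
    and q: "\<bar>ediff (ediff (f x) (g x)) (ediff (f xb) (g xb))\<bar> / ereal (norm (x - xb)) < ereal e"
  shows "(f x = \<infinity> \<and> g x = \<infinity>) \<or> (\<exists>a c. f x = ereal a \<and> g x = ereal c \<and> \<bar>a - c + b\<bar> < e * norm (x - xb))"
proof -
  have n: "norm (x - xb) > 0" using x by simp
  show ?thesis
  proof (cases "f x")
    case (real a)
    show ?thesis
    proof (cases "g x")
      case (real c)
      have "\<bar>a - c + b\<bar> / norm (x - xb) < e" using q \<open>f x = ereal a\<close> real f0 gb n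
        by (simp add: ediff_def)
      then have "\<bar>a - c + b\<bar> < e * norm (x - xb)" using n by (simp add: field_simps)
      then show ?thesis using \<open>f x = ereal a\<close> real by blast
    next
      case PInf then show ?thesis using q \<open>f x = ereal a\<close> f0 gb n by (simp add: ediff_def)
    next
      case MInf then show ?thesis using ng by simp
    qed
  next
    case PInf
    show ?thesis
    proof (cases "g x")
      case (real c)
      then show ?thesis using q PInf f0 gb n by (simp add: ediff_def)
    next
      case PInf then show ?thesis using \<open>f x = \<infinity>\<close> by simp
    next
      case MInf then show ?thesis using ng by simp
    qed
  next
    case MInf then show ?thesis using nf by simp
  qed
qed



lemma pert_plsc:
  fixes f :: "'a::euclidean_space \<Rightarrow> ereal"
  assumes P: "plsc_convex f" and f0: "f xb = 0"
  shows "plsc_convex (\<lambda>x. f x + ereal (\<epsilon> * (u \<bullet> (x - xb))))"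
proof -
  define l where "l x = \<epsilon> * (u \<bullet> (x - xb))" for x
  have nm: "\<forall>x. f x \<noteq> -\<infinity>" and cf: "convex_fun f" and lf: "lsc_fun f"
    using P by (auto simp: plsc_convex_def proper_fun_def)
  have pr: "proper_fun (\<lambda>x. f x + ereal (l x))"
    unfolding proper_fun_def
  proof
    show "\<forall>x. f x + ereal (l x) \<noteq> - \<infinity>" using nm by simp
    show "\<exists>x. f x + ereal (l x) < \<infinity>" by (rule exI[of _ xb]) (simp add: f0)
  qed
  have ll: "(l \<longlongrightarrow> l x) (at x)" for x unfolding l_def by (intro tendsto_intros)
  have ls: "lsc_fun (\<lambda>x. f x + ereal (l x))"
    unfolding lsc_fun_def
  proof
    fix x
    show "f x + ereal (l x) \<le> Liminf (at x) (\<lambda>x. f x + ereal (l x))"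
      unfolding le_Liminf_iff
    proof (intro allI impI)
      fix y assume y: "y < f x + ereal (l x)"
      obtain w where w: "y < ereal w" "ereal w < f x + ereal (l x)" using ereal_dense2[OF y] by blast
      have "ereal (w - l x) < f x" using w(2) nm by (cases "f x") auto
      then obtain v where v: "ereal (w - l x) < ereal v" "ereal v < f x" using ereal_dense2 by blast
      have e1: "\<forall>\<^sub>F z in at x. ereal v < f z"
        using lf v(2) unfolding lsc_fun_def le_Liminf_iff by (meson order_less_le_trans)
      have e2: "\<forall>\<^sub>F z in at x. l x - (v - (w - l x)) < l z"
        using ll[of x] v(1) by (intro order_tendstoD) auto
      show "\<forall>\<^sub>F z in at x. y < f z + ereal (l z)"
        using e1 e2
      proof eventually_elim
        case (elim z)
        have "ereal w < f z + ereal (l z)" using elim nm by (cases "f z") auto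
        then show ?case using w(1) by simp
      qed
    qed
  qed
  have cv: "convex_fun (\<lambda>x. f x + ereal (l x))"
    unfolding convex_fun_def
  proof (intro allI impI)
    fix x y and t :: real assume t: "0 < t \<and> t < 1"
    have lin: "l ((1 - t) *\<^sub>R x + t *\<^sub>R y) = (1 - t) * l x + t * l y"
      unfolding l_def by (simp add: algebra_simps inner_diff_right)
    have fc: "f ((1 - t) *\<^sub>R x + t *\<^sub>R y) \<le> ereal (1 - t) * f x + ereal t * f y"
      using cf t unfolding convex_fun_def by blast
    show "f ((1 - t) *\<^sub>R x + t *\<^sub>R y) + ereal (l ((1 - t) *\<^sub>R x + t *\<^sub>R y))
          \<le> ereal (1 - t) * (f x + ereal (l x)) + ereal t * (f y + ereal (l y))"
    proof (cases "f x = \<infinity> \<or> f y = \<infinity>")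
      case True
      have A1: "ereal (1 - t) * (f x + ereal (l x)) \<noteq> -\<infinity>"
        using t nm by (cases "f x"; simp)
      have A2: "ereal t * (f y + ereal (l y)) \<noteq> -\<infinity>"
        using t nm by (cases "f y"; simp)
      note A = A1 A2
      have "ereal (1 - t) * (f x + ereal (l x)) = \<infinity> \<or> ereal t * (f y + ereal (l y)) = \<infinity>"
        using True t by auto
      then have "ereal (1 - t) * (f x + ereal (l x)) + ereal t * (f y + ereal (l y)) = \<infinity>"
        using A by auto
      then show ?thesis by (simp only:) simp
    next
      case False
      then obtain a b where ab: "f x = ereal a" "f y = ereal b" using nm
        by (metis ereal_cases)
      then have "f ((1 - t) *\<^sub>R x + t *\<^sub>R y) \<le> ereal ((1 - t) * a + t * b)" using fc by simp
      moreover obtain c where c: "f ((1 - t) *\<^sub>R x + t *\<^sub>R y) = ereal c"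
        using calculation nm by (cases "f ((1 - t) *\<^sub>R x + t *\<^sub>R y)") auto
      ultimately have "c \<le> (1 - t) * a + t * b" by simp
      then show ?thesis using ab c lin by (simp add: algebra_simps)
    qed
  qed
  show ?thesis using pr ls cv unfolding plsc_convex_def l_def by simp
qed



lemma BC:
  fixes f :: "'a::euclidean_space \<Rightarrow> ereal" and xb :: 'a
  assumes P: "plsc_convex f" and f0: "f xb = 0"
    and B: "\<exists>c>0. \<exists>\<epsilon>>0. \<forall>g. plsc_convex g \<and> xb \<in> Sset g
                 \<and> perturb_limsup f g xb \<le> ereal \<epsilon> \<longrightarrow> tau_min g xb \<le> ereal c"
  shows "\<exists>c>0. \<exists>\<epsilon>>0. \<forall>u::'a. norm u \<le> 1 \<longrightarrow>
                 tau_min (\<lambda>x. f x + ereal (\<epsilon> * (u \<bullet> (x - xb)))) xb \<le> ereal c"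
proof -
  obtain c \<epsilon> where c: "c > 0" "\<epsilon> > 0" and H: "\<And>g. plsc_convex g \<Longrightarrow> xb \<in> Sset g
                 \<Longrightarrow> perturb_limsup f g xb \<le> ereal \<epsilon> \<Longrightarrow> tau_min g xb \<le> ereal c"
    using B by blast
  have nm: "\<forall>x. f x \<noteq> -\<infinity>" using P by (auto simp: plsc_convex_def proper_fun_def)
  show ?thesis
  proof (intro exI conjI allI impI)
    fix u :: 'a assume u: "norm u \<le> 1"
    define g where "g x = f x + ereal (\<epsilon> * (u \<bullet> (x - xb)))" for x
    have "plsc_convex g" unfolding g_def by (rule pert_plsc[OF P f0])
    moreover have "xb \<in> Sset g" by (simp add: g_def Sset_def f0)
    moreover have "perturb_limsup f g xb \<le> ereal \<epsilon>"
      unfolding perturb_limsup_def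
    proof (rule Limsup_bounded)
      show "\<forall>\<^sub>F x in at xb. \<bar>ediff (ediff (f x) (g x)) (ediff (f xb) (g xb))\<bar> / ereal (norm (x - xb)) \<le> ereal \<epsilon>"
        unfolding eventually_at
      proof (intro exI[of _ 1] conjI allI ballI impI)
        fix x assume x: "x \<noteq> xb \<and> dist x xb < 1"
        then have n: "norm (x - xb) > 0" by simp
        show "\<bar>ediff (ediff (f x) (g x)) (ediff (f xb) (g xb))\<bar> / ereal (norm (x - xb)) \<le> ereal \<epsilon>"
        proof (cases "f x")
          case (real a)
          have cs: "\<bar>u \<bullet> (x - xb)\<bar> \<le> norm (x - xb)"
            using Cauchy_Schwarz_ineq2[of u "x - xb"] u
            by (meson mult_left_le_one_le norm_ge_zero order_trans)
          have "\<bar>\<epsilon> * (u \<bullet> (x - xb))\<bar> / norm (x - xb) \<le> \<epsilon>"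
            using cs n c by (simp add: field_simps abs_mult)
          then show ?thesis using real n by (simp add: g_def ediff_def f0)
        next
          case PInf then show ?thesis using c by (simp add: g_def ediff_def f0)
        next
          case MInf then show ?thesis using nm by simp
        qed
      qed simp
    qed
    ultimately show "tau_min g xb \<le> ereal c" by (rule H)
  qed (use c in auto)
qed



lemma div_ge:
  assumes "t > 0" "z \<noteq> -\<infinity>" "ereal y \<le> z / ereal t"
  shows "ereal (y * t) \<le> z"
  using assms by (cases z) (auto simp: field_simps)

lemma div_lt:
  assumes "t > 0" "z / ereal t < ereal y"
  shows "z < ereal (y * t)"
  using assms by (cases z) (auto simp: field_simps)

lemma small:
  assumes cf: "convex_fun f" and nm: "\<forall>x. f x \<noteq> -\<infinity>" and f0: "f xb = 0"
    and t0: "f (xb + t0 *\<^sub>R h) < ereal (\<theta> * t0)" and t: "0 < t" "t < t0"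
  shows "f (xb + t *\<^sub>R h) < ereal (\<theta> * t)"
proof -
  obtain r where r: "f (xb + t0 *\<^sub>R h) = ereal r" using t0 nm by (cases "f (xb + t0 *\<^sub>R h)") auto
  have "f (xb + t *\<^sub>R h) \<le> ereal (t/t0) * f (xb + t0 *\<^sub>R h)" by (rule conv_small[OF cf f0 t])
  also have "\<dots> = ereal (t/t0 * r)" using r by simp
  also have "t/t0 * r < \<theta> * t" using t0 r t
    by (simp add: field_simps)
  finally show ?thesis by simp
qed

lemma p_le_q:
  assumes cf: "convex_fun f" and nm: "\<forall>x. f x \<noteq> -\<infinity>" and f0: "f xb = 0" and t: "t > 0"
  shows "dir_deriv f xb h \<le> f (xb + t *\<^sub>R h) / ereal t"
  unfolding dd_inf[OF cf nm f0] using t by (intro INF_lower) auto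

lemma p_lt:
  assumes cf: "convex_fun f" and nm: "\<forall>x. f x \<noteq> -\<infinity>" and f0: "f xb = 0" and p: "dir_deriv f xb h < ereal y"
  shows "\<exists>t>0. f (xb + t *\<^sub>R h) < ereal (y * t)"
proof -
  obtain t where "t > 0" "f (xb + t *\<^sub>R h) / ereal t < ereal y"
    using p unfolding dd_inf[OF cf nm f0] by (auto simp: INF_less_iff)
  then show ?thesis using div_lt by blast
qed



lemma CA:
  fixes f :: "'a::euclidean_space \<Rightarrow> ereal" and xb :: 'a
  assumes P: "plsc_convex f" and f0: "f xb = 0"
    and Cc: "\<exists>c>0. \<exists>\<epsilon>>0. \<forall>u::'a. norm u \<le> 1 \<longrightarrow>
                 tau_min (\<lambda>x. f x + ereal (\<epsilon> * (u \<bullet> (x - xb)))) xb \<le> ereal c"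
  shows "(INF h\<in>{h. norm h = 1}. dir_deriv f xb h) \<noteq> 0"
proof
  assume I0: "(INF h\<in>{h. norm h = 1}. dir_deriv f xb h) = 0"
  have nm: "\<forall>x. f x \<noteq> -\<infinity>" and cf: "convex_fun f"
    using P by (auto simp: plsc_convex_def proper_fun_def)
  obtain c \<epsilon> where c: "c > 0" "\<epsilon> > 0" and H: "\<And>u::'a. norm u \<le> 1 \<Longrightarrow>
                 tau_min (\<lambda>x. f x + ereal (\<epsilon> * (u \<bullet> (x - xb)))) xb \<le> ereal c"
    using Cc by blast
  have pnn: "0 \<le> dir_deriv f xb h" if "norm h = 1" for h
    using I0 that INF_lower[of h "{h. norm h = 1}" "dir_deriv f xb"] by simp
  have fnn: "0 \<le> f z" for z
  proof (cases "z = xb")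
    case True then show ?thesis using f0 by simp
  next
    case False
    define t where "t = norm (z - xb)"
    define h where "h = (1/t) *\<^sub>R (z - xb)"
    have t: "t > 0" using False by (simp add: t_def)
    have h: "norm h = 1" using t by (simp add: h_def t_def)
    have z: "xb + t *\<^sub>R h = z" using t by (simp add: h_def)
    have "ereal 0 \<le> f z / ereal t" using order.trans[OF pnn[OF h] p_le_q[OF cf nm f0 t, of h]] z by (simp add: zero_ereal_def)
    then have "ereal (0 * t) \<le> f z" using div_ge[OF t nm[rule_format]] by blast
    then show ?thesis by (simp add: zero_ereal_def)
  qed
  define \<theta> where "\<theta> = 1 / (8 * c)"
  define \<eta> where "\<eta> = min 1 (1 / (8 * c * \<epsilon>))"
  have th: "\<theta> > 0" using c by (simp add: \<theta>_def)
  have eta: "0 < \<eta>" "\<eta> \<le> 1" "\<epsilon> * \<eta> \<le> 1 / (8 * c)" using c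
    by (auto simp: \<eta>_def min_def field_simps)
  have "(INF h\<in>{h. norm h = 1}. dir_deriv f xb h) < ereal \<theta>" using I0 th by simp
  then obtain h where h: "norm h = 1" "dir_deriv f xb h < ereal \<theta>" by (auto simp: INF_less_iff)
  obtain t0 where t0: "t0 > 0" "f (xb + t0 *\<^sub>R h) < ereal (\<theta> * t0)"
    using p_lt[OF cf nm f0 h(2)] by blast
  define u where "u = \<eta> *\<^sub>R h"
  have u: "norm u \<le> 1" using h eta by (simp add: u_def)
  define g where "g x = f x + ereal (\<epsilon> * (u \<bullet> (x - xb)))" for x
  have Hg: "tau_min g xb \<le> ereal c" unfolding g_def by (rule H[OF u])
  have Sg: "h \<bullet> (y - xb) \<le> 0" if "y \<in> Sset g" for y
  proof -
    have gy: "g y \<le> 0" using that by (simp add: Sset_def)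
    obtain r where r: "f y = ereal r" using gy nm fnn[of y] by (cases "f y") (auto simp: g_def)
    have "r \<ge> 0" using fnn[of y] r by simp
    moreover have "r + \<epsilon> * (u \<bullet> (y - xb)) \<le> 0" using gy r by (simp add: g_def zero_ereal_def)
    ultimately have "\<epsilon> * (\<eta> * (h \<bullet> (y - xb))) \<le> 0" by (simp add: u_def)
    then show ?thesis using c eta by (simp add: mult_le_0_iff)
  qed
  have xbS: "xb \<in> Sset g" by (simp add: g_def Sset_def f0)
  have big: "ereal (2 * c) \<le> tau_min g xb"
    unfolding tau_min_def
  proof (rule Inf_greatest, clarify)
    fix \<tau> \<delta> :: real
    assume tau: "\<tau> > 0" and d: "\<delta> > 0"
      and EB: "\<forall>x\<in>cball xb \<delta>. edist_set x (Sset g) \<le> ereal \<tau> * pos_part (g x)"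
    show "ereal (2 * c) \<le> ereal \<tau>"
    proof (rule ccontr)
      assume "\<not> ereal (2 * c) \<le> ereal \<tau>"
      then have tc: "\<tau> < 2 * c" by simp
      define t where "t = min (t0/2) \<delta>"
      have t: "0 < t" "t < t0" "t \<le> \<delta>" using t0 d by (auto simp: t_def)
      define x where "x = xb + t *\<^sub>R h"
      have xc: "x \<in> cball xb \<delta>" using t h by (simp add: x_def dist_norm)
      have fx: "f x < ereal (\<theta> * t)" unfolding x_def by (rule small[OF cf nm f0 t0(2) t(1,2)])
      obtain r where r: "f x = ereal r" using fx nm by (cases "f x") auto
      have r0: "0 \<le> r" using fnn[of x] r by simp
      have rt: "r < \<theta> * t" using fx r by simp
      have ux: "u \<bullet> (x - xb) = \<eta> * t" using h by (simp add: u_def x_def power2_norm_eq_inner[symmetric])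
      have gx: "g x = ereal (r + \<epsilon> * (\<eta> * t))" using r ux by (simp add: g_def)
      have pos: "0 < r + \<epsilon> * (\<eta> * t)" using r0 c eta t by (simp add: add_nonneg_pos)
      have dist: "t \<le> infdist x (Sset g)"
        unfolding infdist_notempty[OF ex_in_conv[THEN iffD1, OF exI, OF xbS]]
      proof (rule cINF_greatest)
        show "Sset g \<noteq> {}" using xbS by auto
      next
        fix y assume y: "y \<in> Sset g"
        have "h \<bullet> (x - y) \<le> norm h * norm (x - y)" by (rule norm_cauchy_schwarz)
        also have "\<dots> = dist x y" using h by (simp add: dist_norm)
        finally have "h \<bullet> (x - y) \<le> dist x y" .
        moreover have "h \<bullet> (x - y) = t - h \<bullet> (y - xb)"
          using h by (simp add: x_def inner_diff_right inner_add_right power2_norm_eq_inner[symmetric])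
        ultimately show "t \<le> dist x y" using Sg[OF y] by simp
      qed
      have "edist_set x (Sset g) \<le> ereal \<tau> * pos_part (g x)" using EB xc by blast
      moreover have "edist_set x (Sset g) = ereal (infdist x (Sset g))" using xbS by (auto simp: edist_set_def)
      moreover have "pos_part (g x) = ereal (r + \<epsilon> * (\<eta> * t))" using gx pos by (simp add: pos_part_def max_def)
      ultimately have "infdist x (Sset g) \<le> \<tau> * (r + \<epsilon> * (\<eta> * t))" by simp
      also have "\<dots> \<le> \<tau> * (t / (4 * c))"
      proof (rule mult_left_mono)
        have "r + \<epsilon> * (\<eta> * t) \<le> \<theta> * t + t / (8 * c)"
        proof -
          have "(\<epsilon> * \<eta>) * t \<le> (1 / (8 * c)) * t" using eta(3) t(1) by (intro mult_right_mono) simp_all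
          then show ?thesis using rt by (simp add: mult.assoc)
        qed
        also have "\<dots> = t / (4 * c)" unfolding \<theta>_def using c by (simp add: field_simps)
        finally show "r + \<epsilon> * (\<eta> * t) \<le> t / (4 * c)" .
      qed (use tau in simp)
      also have "\<dots> < 2 * c * (t / (4 * c))" using tc t c by (intro mult_strict_right_mono) auto
      also have "\<dots> = t / 2" using c by simp
      finally show False using dist t by simp
    qed
  qed
  have "ereal (2 * c) \<le> ereal c" using big Hg by (rule order.trans)
  then show False using c by simp
qed



lemma AB_neg:
  fixes f :: "'a::euclidean_space \<Rightarrow> ereal" and xb :: 'a
  assumes P: "plsc_convex f" and f0: "f xb = 0"
    and I: "(INF h\<in>{h. norm h = 1}. dir_deriv f xb h) < 0"
  shows "\<exists>c>0. \<exists>\<epsilon>>0. \<forall>g. plsc_convex g \<and> xb \<in> Sset g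
                 \<and> perturb_limsup f g xb \<le> ereal \<epsilon> \<longrightarrow> tau_min g xb \<le> ereal c"
proof -
  have nm: "\<forall>x. f x \<noteq> -\<infinity>" and cf: "convex_fun f"
    using P by (auto simp: plsc_convex_def proper_fun_def)
  obtain h where h: "norm h = 1" "dir_deriv f xb h < 0" using I by (auto simp: INF_less_iff)
  obtain y where y: "dir_deriv f xb h < ereal y" "ereal y < 0" using ereal_dense2[OF h(2)] by blast
  define m where "m = - y"
  have m: "m > 0" using y by (simp add: m_def)
  obtain t0 where t0: "t0 > 0" "f (xb + t0 *\<^sub>R h) < ereal (- m * t0)"
    using p_lt[OF cf nm f0 y(1)] by (auto simp: m_def)
  have ft: "f (xb + t *\<^sub>R h) < ereal (- m * t)" if "0 < t" "t < t0" for t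
    by (rule small[OF cf nm f0 t0(2) that])
  show ?thesis
  proof (intro exI conjI allI impI)
    show "8 / m > 0" "m / 2 > 0" using m by auto
    fix g assume G: "plsc_convex g \<and> xb \<in> Sset g \<and> perturb_limsup f g xb \<le> ereal (m / 2)"
    have gnm: "\<forall>x. g x \<noteq> -\<infinity>" and cg: "convex_fun g"
      using G by (auto simp: plsc_convex_def proper_fun_def)
    have xbS: "xb \<in> Sset g" using G by blast
    obtain b where b: "g xb = ereal b" using xbS gnm by (cases "g xb") (auto simp: Sset_def)
    have b0: "b \<le> 0" using xbS b by (simp add: Sset_def zero_ereal_def)
    obtain r where r: "r > 0" and R: "\<And>x. x \<noteq> xb \<and> dist x xb < r \<Longrightarrow>
       \<bar>ediff (ediff (f x) (g x)) (ediff (f xb) (g xb))\<bar> / ereal (norm (x - xb)) < ereal (3 * m / 4)"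
      using limsup_ev[of f g xb "m/2" "3 * m / 4"] G m by auto
    define \<delta> where "\<delta> = min t0 r / 2"
    have d: "\<delta> > 0" "\<delta> < t0" "\<delta> < r" using t0 r by (auto simp: \<delta>_def)
    show "tau_min g xb \<le> ereal (8 / m)"
    proof (rule tau_le[OF _ d(1)])
      show "8 / m > 0" using m by simp
      show "\<forall>x\<in>cball xb \<delta>. edist_set x (Sset g) \<le> ereal (8 / m) * pos_part (g x)"
      proof
        fix x assume xc: "x \<in> cball xb \<delta>"
        show "edist_set x (Sset g) \<le> ereal (8 / m) * pos_part (g x)"
        proof (rule eb_point[OF xbS])
          show "8 / m > 0" using m by simp
          show "g x \<noteq> -\<infinity>" using gnm by simp
          fix \<alpha> assume ga: "g x = ereal \<alpha>" "\<alpha> > 0"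
          have xne: "x \<noteq> xb" using ga b b0 by auto
          define t where "t = norm (x - xb)"
          have t: "0 < t" "t \<le> \<delta>" using xne xc by (auto simp: t_def dist_norm norm_minus_commute)
          define z where "z = xb + t *\<^sub>R h"
          have fz: "f z < ereal (- m * t)" unfolding z_def using ft t d by simp
          have zne: "z \<noteq> xb" "dist z xb < r" "norm (z - xb) = t" using h t d by (auto simp: z_def dist_norm)
          have Q: "(f z = \<infinity> \<and> g z = \<infinity>) \<or> (\<exists>a c. f z = ereal a \<and> g z = ereal c \<and> \<bar>a - c + b\<bar> < 3 * m / 4 * norm (z - xb))"
            by (rule quot[OF f0 b zne(1) nm[rule_format] gnm[rule_format] R]) (use zne in simp)
          then obtain a c where ac: "f z = ereal a" "g z = ereal c" "\<bar>a - c + b\<bar> < 3 * m / 4 * t"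
            using fz zne by auto
          have a: "a < - m * t" using fz ac by simp
          have "- (3 * m / 4 * t) < a - c + b" using ac(3) by linarith
          then have c: "c < - (m / 4) * t" using a b0 by linarith
          have "infdist x (Sset g) \<le> norm (x - z) * \<alpha> / (\<alpha> - c)"
            by (rule slater[OF cg ga ac(2)]) (use c m t mult_pos_pos[of m t] in linarith)
          also have "\<dots> \<le> (2 * t) * \<alpha> / ((m / 4) * t)"
          proof (rule frac_le)
            have "norm (x - z) = norm ((x - xb) - (z - xb))" by simp
            also have "\<dots> \<le> norm (x - xb) + norm (z - xb)" by (rule norm_triangle_ineq4)
            finally have "norm (x - z) \<le> norm (x - xb) + norm (z - xb)" .
            then show "norm (x - z) * \<alpha> \<le> 2 * t * \<alpha>" using zne ga(2) by (simp add: t_def)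
            show "0 < m / 4 * t" using m t by simp
            show "m / 4 * t \<le> \<alpha> - c" using c ga by simp
          qed (use ga t in simp)
          also have "\<dots> = 8 / m * \<alpha>" using m t by (simp add: field_simps)
          finally show "infdist x (Sset g) \<le> 8 / m * \<alpha>" .
        qed
      qed
    qed
  qed
qed



lemma AB_pos:
  fixes f :: "'a::euclidean_space \<Rightarrow> ereal" and xb :: 'a
  assumes P: "plsc_convex f" and f0: "f xb = 0"
    and I: "0 < (INF h\<in>{h. norm h = 1}. dir_deriv f xb h)"
  shows "\<exists>c>0. \<exists>\<epsilon>>0. \<forall>g. plsc_convex g \<and> xb \<in> Sset g
                 \<and> perturb_limsup f g xb \<le> ereal \<epsilon> \<longrightarrow> tau_min g xb \<le> ereal c"
proof -
  have nm: "\<forall>x. f x \<noteq> -\<infinity>" and cf: "convex_fun f"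
    using P by (auto simp: plsc_convex_def proper_fun_def)
  obtain m where m: "0 < ereal m" "ereal m < (INF h\<in>{h. norm h = 1}. dir_deriv f xb h)"
    using ereal_dense2[OF I] by blast
  have m0: "m > 0" using m by simp
  have fge: "ereal (m * norm (z - xb)) \<le> f z" for z
  proof (cases "z = xb")
    case True then show ?thesis using f0 by simp
  next
    case False
    define t where "t = norm (z - xb)"
    define h where "h = (1/t) *\<^sub>R (z - xb)"
    have t: "t > 0" using False by (simp add: t_def)
    have h: "norm h = 1" using t by (simp add: h_def t_def)
    have z: "xb + t *\<^sub>R h = z" using t by (simp add: h_def)
    have "ereal m \<le> dir_deriv f xb h"
      using m(2) INF_lower[of h "{h. norm h = 1}" "dir_deriv f xb"] h by simp
    then have "ereal m \<le> f z / ereal t" using order.trans[OF _ p_le_q[OF cf nm f0 t, of h]] z by simp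
    then have "ereal (m * t) \<le> f z" using div_ge[OF t nm[rule_format]] by blast
    then show ?thesis by (simp add: t_def)
  qed
  show ?thesis
  proof (intro exI conjI allI impI)
    show "4 / m > 0" "m / 2 > 0" using m0 by auto
    fix g assume G: "plsc_convex g \<and> xb \<in> Sset g \<and> perturb_limsup f g xb \<le> ereal (m / 2)"
    have gnm: "\<forall>x. g x \<noteq> -\<infinity>" and cg: "convex_fun g"
      using G by (auto simp: plsc_convex_def proper_fun_def)
    have xbS: "xb \<in> Sset g" using G by blast
    obtain b where b: "g xb = ereal b" using xbS gnm by (cases "g xb") (auto simp: Sset_def)
    have b0: "b \<le> 0" using xbS b by (simp add: Sset_def zero_ereal_def)
    show "tau_min g xb \<le> ereal (4 / m)"
    proof (cases "b < 0")
      case True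
      define \<delta> where "\<delta> = 4 / m * (- b)"
      have d: "\<delta> > 0" using True m0 by (simp add: \<delta>_def divide_neg_pos)
      show ?thesis
      proof (rule tau_le[OF _ d])
        show "4 / m > 0" using m0 by simp
        show "\<forall>x\<in>cball xb \<delta>. edist_set x (Sset g) \<le> ereal (4 / m) * pos_part (g x)"
        proof
          fix x assume xc: "x \<in> cball xb \<delta>"
          show "edist_set x (Sset g) \<le> ereal (4 / m) * pos_part (g x)"
          proof (rule eb_point[OF xbS])
            show "4 / m > 0" using m0 by simp
            show "g x \<noteq> -\<infinity>" using gnm by simp
            fix \<alpha> assume ga: "g x = ereal \<alpha>" "\<alpha> > 0"
            have "infdist x (Sset g) \<le> norm (x - xb) * \<alpha> / (\<alpha> - b)"
              by (rule slater[OF cg ga b True])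
            also have "\<dots> \<le> \<delta> * \<alpha> / (- b)"
            proof (rule frac_le)
              show "norm (x - xb) * \<alpha> \<le> \<delta> * \<alpha>" using xc ga(2)
                by (intro mult_right_mono) (auto simp: dist_norm norm_minus_commute)
            qed (use ga True d in auto)
            also have "\<dots> = 4 / m * \<alpha>" using True by (simp add: \<delta>_def)
            finally show "infdist x (Sset g) \<le> 4 / m * \<alpha>" .
          qed
        qed
      qed
    next
      case False
      then have b00: "b = 0" using b0 by simp
      obtain r where r: "r > 0" and R: "\<And>x. x \<noteq> xb \<and> dist x xb < r \<Longrightarrow>
         \<bar>ediff (ediff (f x) (g x)) (ediff (f xb) (g xb))\<bar> / ereal (norm (x - xb)) < ereal (3 * m / 4)"
        using limsup_ev[of f g xb "m/2" "3 * m / 4"] G m0 by auto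
      define \<delta> where "\<delta> = r / 2"
      have d: "\<delta> > 0" "\<delta> < r" using r by (auto simp: \<delta>_def)
      show ?thesis
      proof (rule tau_le[OF _ d(1)])
        show "4 / m > 0" using m0 by simp
        show "\<forall>x\<in>cball xb \<delta>. edist_set x (Sset g) \<le> ereal (4 / m) * pos_part (g x)"
        proof
          fix x assume xc: "x \<in> cball xb \<delta>"
          show "edist_set x (Sset g) \<le> ereal (4 / m) * pos_part (g x)"
          proof (rule eb_point[OF xbS])
            show "4 / m > 0" using m0 by simp
            show "g x \<noteq> -\<infinity>" using gnm by simp
            fix \<alpha> assume ga: "g x = ereal \<alpha>" "\<alpha> > 0"
            have xne: "x \<noteq> xb" using ga b b00 by auto
            have xr: "dist x xb < r" using xc d by (simp add: dist_commute)
            have Q: "(f x = \<infinity> \<and> g x = \<infinity>) \<or> (\<exists>a c. f x = ereal a \<and> g x = ereal c \<and> \<bar>a - c + b\<bar> < 3 * m / 4 * norm (x - xb))"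
              by (rule quot[OF f0 b xne nm[rule_format] gnm[rule_format] R]) (use xne xr in simp)
            then obtain a where a: "f x = ereal a" "\<bar>a - \<alpha> + b\<bar> < 3 * m / 4 * norm (x - xb)"
              using ga by auto
            have "m * norm (x - xb) \<le> a" using fge[of x] a by simp
            moreover have "a - \<alpha> < 3 * m / 4 * norm (x - xb)" using a(2) b00 by linarith
            ultimately have "m / 4 * norm (x - xb) \<le> \<alpha>" by linarith
            then have "norm (x - xb) \<le> 4 / m * \<alpha>" using m0 by (simp add: field_simps)
            then show "infdist x (Sset g) \<le> 4 / m * \<alpha>"
              using infdist_le[OF xbS, of x] by (simp add: dist_norm)
          qed
        qed
      qed
    qed
  qed
qed


theorem theorem5:
  fixes f :: "'a::euclidean_space \<Rightarrow> ereal" and xb :: 'a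
  assumes "plsc_convex f" and "f xb = 0"
  shows "((INF h\<in>{h. norm h = 1}. dir_deriv f xb h) \<noteq> 0
          \<longleftrightarrow> (\<exists>c>0. \<exists>\<epsilon>>0. \<forall>g. plsc_convex g \<and> xb \<in> Sset g
                 \<and> perturb_limsup f g xb \<le> ereal \<epsilon> \<longrightarrow> tau_min g xb \<le> ereal c))
       \<and> ((\<exists>c>0. \<exists>\<epsilon>>0. \<forall>g. plsc_convex g \<and> xb \<in> Sset g
                 \<and> perturb_limsup f g xb \<le> ereal \<epsilon> \<longrightarrow> tau_min g xb \<le> ereal c)
          \<longleftrightarrow> (\<exists>c>0. \<exists>\<epsilon>>0. \<forall>u::'a. norm u \<le> 1 \<longrightarrow>
                 tau_min (\<lambda>x. f x + ereal (\<epsilon> * (u \<bullet> (x - xb)))) xb \<le> ereal c))"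
  (is "(?A \<longleftrightarrow> ?B) \<and> (?B \<longleftrightarrow> ?C)")
proof -
  have AB: "?A \<Longrightarrow> ?B"
  proof -
    assume A: ?A
    show ?B
    proof (cases "(INF h\<in>{h. norm h = 1}. dir_deriv f xb h) < 0")
      case True then show ?thesis by (rule AB_neg[OF assms])
    next
      case False
      then have "0 < (INF h\<in>{h. norm h = 1}. dir_deriv f xb h)" using A by simp
      then show ?thesis by (rule AB_pos[OF assms])
    qed
  qed
  have BC: "?B \<Longrightarrow> ?C" by (rule BC[OF assms])
  have CA: "?C \<Longrightarrow> ?A" by (rule CA[OF assms])
  show ?thesis using AB BC CA by blast
qed

end
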